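(* Fix $k\in\mathbb{N}$, positive constants $b_0,b_1,b_2,\lambda_0,\lambda_1$ and $\mu\in(0,1)$. There exists $C>0$ depending only on $b_0,b_1,\lambda_0,\lambda_1,\mu$ (and the fixed $k$) such that the following holds. Let $T\geq10$, $\ell<r$, $a^\pm\in\mathbb{R}^k$, $g:[\ell,r]\to\mathbb{R}$ Lipschitz with $g(\ell)=g(r)=0$, and $P\subset(\ell,\ell+T^{1/2})$ finite (with $P\subset(\ell,r)$). Suppose that $r-\ell\leq b_0T$, $|P|\leq b_0T$, $|g(x)-g(y)|\leq b_1T|x-y|$ for all $x,y$, $a^\pm_j-a^\pm_{j+1}\geq\lambda_0T^{1/2}$ for $j\in\{1,\dots,k-1\}$, $a^-_k-g(\ell)\geq\lambda_1T$, $a^+_k-g(r)\geq\lambda_1T$, $a^-_1-g(\ell)\leq b_2T^2$, $a^+_1-g(r)\leq b_2T^2$. Then $\mathbb{P}_{\mathrm{free}}(\mathsf{H})\geq C^{-1}e^{-CT^{5/2}}$.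
   Context: $\mathbb{P}_{\mathrm{free}}$ denotes the law of $k$ independent Brownian bridges (diffusion parameter one) $\mathcal{L}=(\mathcal{L}_1,\dots,\mathcal{L}_k)$ on $[\ell,r]$ with $\mathcal{L}_j(\ell)=a^-_j$, $\mathcal{L}_j(r)=a^+_j$. $\mathsf{H}$ is the event that $\mathcal{L}_j(p)-\mathcal{L}_{j+1}(p)\geq\mu\lambda_0T^{1/2}$ for all $p\in P$ and $j\in\{1,\dots,k-1\}$, and $\mathcal{L}_k(p)-g(p)\geq\mu\lambda_1T$ for all $p\in P$. *)

theory Defs
  imports "HOL-Probability.Probability"
begin

definition heat_kernel :: "real \<Rightarrow> real \<Rightarrow> real" where
  "heat_kernel t y = exp (- (y\<^sup>2) / (2 * t)) / sqrt (2 * pi * t)"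

text \<open>Finite-dimensional density of a Brownian bridge (diffusion parameter one) on [l,r]
  from value a at l to value b at r, observed at the strictly increasing times ts
  (all in (l,r)); y i is the value at time ts!i.\<close>
definition bridge_fdd_density ::
  "real \<Rightarrow> real \<Rightarrow> real list \<Rightarrow> real \<Rightarrow> real \<Rightarrow> (nat \<Rightarrow> real) \<Rightarrow> real" where
  "bridge_fdd_density l r ts a b y =
     (let m = length ts;
          tt = (\<lambda>i. if i = 0 then l else if i \<le> m then ts ! (i - 1) else r);
          yy = (\<lambda>i. if i = 0 then a else if i \<le> m then y (i - 1) else b)
      in (\<Prod>i<m+1. heat_kernel (tt (i+1) - tt i) (yy (i+1) - yy i))
           / heat_kernel (r - l) (b - a))"

text \<open>Joint law of (L_j(ts!i)) for j in 1..k, i < length ts, where L_1,...,L_k are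
  independent Brownian bridges on [l,r] with L_j(l) = am j, L_j(r) = ap j.
  This is the finite-dimensional marginal of P_free.\<close>
definition free_fdd ::
  "nat \<Rightarrow> real \<Rightarrow> real \<Rightarrow> (nat \<Rightarrow> real) \<Rightarrow> (nat \<Rightarrow> real) \<Rightarrow> real list
     \<Rightarrow> (nat \<times> nat \<Rightarrow> real) measure" where
  "free_fdd k l r am ap ts =
     density (PiM ({1..k} \<times> {..<length ts}) (\<lambda>_. lborel))
       (\<lambda>x. ennreal (\<Prod>j\<in>{1..k}. bridge_fdd_density l r ts (am j) (ap j) (\<lambda>i. x (j, i))))"

text \<open>P_free(H): H only depends on the values of the curves at the finitely many points of P,
  so its probability is computed from the finite-dimensional law at the sorted points of P.\<close>
definition Pfree_H ::
  "nat \<Rightarrow> real \<Rightarrow> real \<Rightarrow> (nat \<Rightarrow> real) \<Rightarrow> (nat \<Rightarrow> real) \<Rightarrow> real set \<Rightarrow> (real \<Rightarrow> real)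
     \<Rightarrow> real \<Rightarrow> real \<Rightarrow> real \<Rightarrow> real \<Rightarrow> real" where
  "Pfree_H k l r am ap P g mu lam0 lam1 T =
     (let ts = sorted_list_of_set P; M = free_fdd k l r am ap ts
      in measure M {x \<in> space M. \<forall>i < length ts.
            (\<forall>j \<in> {1..<k}. x (j, i) - x (j+1, i) \<ge> mu * lam0 * sqrt T) \<and>
            x (k, i) - g (ts ! i) \<ge> mu * lam1 * T})"

end

theory Submission
  imports Defs
begin


definition prv :: "(nat \<Rightarrow> real) \<Rightarrow> (nat \<times> nat \<Rightarrow> real) \<Rightarrow> nat \<Rightarrow> nat \<Rightarrow> real" where
  "prv a x j i = (if i = 0 then a j else x (j, i - 1))"

definition lc :: "(nat \<times> nat) set \<Rightarrow> bool" where
  "lc J \<longleftrightarrow> (\<forall>j i. (j, Suc i) \<in> J \<longrightarrow> (j, i) \<in> J)"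

definition chainF :: "(nat \<Rightarrow> nat \<Rightarrow> real \<Rightarrow> real \<Rightarrow> ennreal) \<Rightarrow> (nat \<Rightarrow> real) \<Rightarrow> (nat \<times> nat) set
   \<Rightarrow> (nat \<times> nat \<Rightarrow> real) \<Rightarrow> ennreal" where
  "chainF \<phi> a J x = (\<Prod>q\<in>J. \<phi> (fst q) (snd q) (prv a x (fst q) (snd q)) (x q))"

lemma chainF_meas:
  assumes meas: "\<And>j i. case_prod (\<phi> j i) \<in> borel_measurable (borel \<Otimes>\<^sub>M borel)"
    and "lc J"
  shows "chainF \<phi> a J \<in> borel_measurable (PiM J (\<lambda>_. lborel))"
  unfolding chainF_def
proof (rule borel_measurable_prod_ennreal)
  fix q assume q: "q \<in> J"
  obtain j i where qq: "q = (j, i)" by force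
  have p: "(\<lambda>x. prv a x j i) \<in> borel_measurable (PiM J (\<lambda>_. lborel))"
  proof (cases i)
    case 0 then show ?thesis by (simp add: prv_def)
  next
    case (Suc i')
    then have "(j, i') \<in> J" using q qq assms(2) unfolding lc_def by auto
    then have "(\<lambda>x. x (j, i')) \<in> measurable (PiM J (\<lambda>_. lborel)) lborel"
      by (rule measurable_component_singleton)
    then show ?thesis using Suc by (simp add: prv_def)
  qed
  have c: "(\<lambda>x. x q) \<in> borel_measurable (PiM J (\<lambda>_. lborel))"
    using measurable_component_singleton[OF q, of "\<lambda>_. lborel"] by simp
  have "(\<lambda>x. (prv a x j i, x q)) \<in> measurable (PiM J (\<lambda>_. lborel)) (borel \<Otimes>\<^sub>M borel)"
    using p c by (rule measurable_Pair)
  from measurable_compose[OF this meas[of j i]]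
  show "(\<lambda>x. \<phi> (fst q) (snd q) (prv a x (fst q) (snd q)) (x q)) \<in> borel_measurable (PiM J (\<lambda>_. lborel))"
    by (simp add: qq)
qed

lemma chainF_upd:
  assumes "lc J" "(j0, i0) \<in> J" "\<forall>q\<in>J. snd q \<le> i0" and fJ: "finite J"
  shows "chainF \<phi> a J (x((j0,i0) := y)) =
     chainF \<phi> a (J - {(j0,i0)}) x * \<phi> j0 i0 (prv a x j0 i0) y"
proof -
  have fin: "finite J \<or> \<not> finite J" by simp
  have "chainF \<phi> a J (x((j0,i0) := y)) =
     \<phi> j0 i0 (prv a (x((j0,i0) := y)) j0 i0) y * chainF \<phi> a (J - {(j0,i0)}) (x((j0,i0) := y))"
    unfolding chainF_def
    using fJ by (auto simp: prod.remove[OF _ assms(2)])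
  also have "prv a (x((j0,i0) := y)) j0 i0 = prv a x j0 i0" by (auto simp add: prv_def)
  also have "chainF \<phi> a (J - {(j0,i0)}) (x((j0,i0) := y)) = chainF \<phi> a (J - {(j0,i0)}) x"
    unfolding chainF_def
  proof (rule prod.cong)
    fix q assume q: "q \<in> J - {(j0, i0)}"
    obtain j i where qq: "q = (j,i)" by force
    have "prv a (x((j0,i0) := y)) j i = prv a x j i"
    proof (cases i)
      case (Suc i')
      have "(j, i') \<noteq> (j0, i0)" using q qq Suc assms(3) by fastforce
      then show ?thesis using Suc by (auto simp add: prv_def)
    qed (simp add: prv_def)
    then show "\<phi> (fst q) (snd q) (prv a (x((j0, i0) := y)) (fst q) (snd q)) ((x((j0, i0) := y)) q) =
         \<phi> (fst q) (snd q) (prv a x (fst q) (snd q)) (x q)" using q qq by auto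
  qed simp
  finally show ?thesis by (simp add: mult.commute fun_upd_def)
qed

lemma lc_remove:
  assumes "lc J" "(j0, i0) \<in> J" "\<forall>q\<in>J. snd q \<le> i0"
  shows "lc (J - {(j0,i0)})"
  using assms unfolding lc_def by fastforce

lemma chain_ge:
  assumes meas: "\<And>j i. case_prod (\<phi> j i) \<in> borel_measurable (borel \<Otimes>\<^sub>M borel)"
    and lb: "\<And>j i p. (j, i) \<in> J \<Longrightarrow> c j i \<le> (\<integral>\<^sup>+y. \<phi> j i p y \<partial>lborel)"
    and "finite J" "lc J"
  shows "(\<Prod>q\<in>J. c (fst q) (snd q)) \<le> (\<integral>\<^sup>+x. chainF \<phi> a J x \<partial>PiM J (\<lambda>_. lborel))"
  using assms(3,4) lb
proof (induction "card J" arbitrary: J rule: less_induct)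
  case less
  interpret product_sigma_finite "\<lambda>_. lborel" by standard
  show ?case
  proof (cases "J = {}")
    case True
    then show ?thesis by (simp add: chainF_def PiM_empty nn_integral_count_space_finite)
  next
    case False
    define i0 where "i0 = Max (snd ` J)"
    have "i0 \<in> snd ` J" unfolding i0_def using False less.prems by simp
    then obtain j0 where j0: "(j0, i0) \<in> J" by force
    have mx: "\<forall>q\<in>J. snd q \<le> i0" unfolding i0_def using less.prems by simp
    define J' where "J' = J - {(j0,i0)}"
    have JJ: "J = insert (j0,i0) J'" "(j0,i0) \<notin> J'" "finite J'" using j0 less.prems J'_def by auto
    have lc': "lc J'" using lc_remove[OF less.prems(2) j0 mx] J'_def by simp
    have cardlt: "card J' < card J" using JJ by simp
    have IH: "(\<Prod>q\<in>J'. c (fst q) (snd q)) \<le> (\<integral>\<^sup>+x. chainF \<phi> a J' x \<partial>PiM J' (\<lambda>_. lborel))"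
      using less.hyps[OF cardlt JJ(3) lc'] less.prems(3) JJ by blast
    have mJ: "chainF \<phi> a J \<in> borel_measurable (PiM (insert (j0,i0) J') (\<lambda>_. lborel))"
      using chainF_meas[OF meas less.prems(2)] JJ by simp
    have mJ': "chainF \<phi> a J' \<in> borel_measurable (PiM J' (\<lambda>_. lborel))"
      using chainF_meas[OF meas lc'] .
    have E1: "(\<integral>\<^sup>+x. chainF \<phi> a J x \<partial>PiM J (\<lambda>_. lborel)) =
       (\<integral>\<^sup>+x. (\<integral>\<^sup>+y. chainF \<phi> a J (x((j0,i0) := y)) \<partial>lborel) \<partial>PiM J' (\<lambda>_. lborel))"
      using product_nn_integral_insert[OF JJ(3,2) mJ] JJ(1) by simp
    also have "\<dots> = (\<integral>\<^sup>+x. chainF \<phi> a J' x * (\<integral>\<^sup>+y. \<phi> j0 i0 (prv a x j0 i0) y \<partial>lborel) \<partial>PiM J' (\<lambda>_. lborel))"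
    proof (rule nn_integral_cong)
      fix x
      have "(\<integral>\<^sup>+y. chainF \<phi> a J (x((j0,i0) := y)) \<partial>lborel) =
           (\<integral>\<^sup>+y. chainF \<phi> a J' x * \<phi> j0 i0 (prv a x j0 i0) y \<partial>lborel)"
        using chainF_upd[OF less.prems(2) j0 mx less.prems(1)] J'_def by simp
      also have "\<dots> = chainF \<phi> a J' x * (\<integral>\<^sup>+y. \<phi> j0 i0 (prv a x j0 i0) y \<partial>lborel)"
      proof (rule nn_integral_cmult)
        have "(\<lambda>y. (prv a x j0 i0, y)) \<in> measurable lborel (borel \<Otimes>\<^sub>M borel)" by simp
        from measurable_compose[OF this meas[of j0 i0]]
        show "\<phi> j0 i0 (prv a x j0 i0) \<in> borel_measurable lborel" by simp
      qed
      finally show "(\<integral>\<^sup>+y. chainF \<phi> a J (x((j0,i0) := y)) \<partial>lborel) =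
           chainF \<phi> a J' x * (\<integral>\<^sup>+y. \<phi> j0 i0 (prv a x j0 i0) y \<partial>lborel)" .
    qed
    finally have E: "(\<integral>\<^sup>+x. chainF \<phi> a J x \<partial>PiM J (\<lambda>_. lborel)) =
      (\<integral>\<^sup>+x. chainF \<phi> a J' x * (\<integral>\<^sup>+y. \<phi> j0 i0 (prv a x j0 i0) y \<partial>lborel) \<partial>PiM J' (\<lambda>_. lborel))" .
    have "(\<Prod>q\<in>J. c (fst q) (snd q)) = (\<Prod>q\<in>J'. c (fst q) (snd q)) * c j0 i0"
      using JJ by (simp add: mult.commute)
    also have "\<dots> \<le> (\<integral>\<^sup>+x. chainF \<phi> a J' x \<partial>PiM J' (\<lambda>_. lborel)) * c j0 i0"
      by (intro mult_right_mono IH) simp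
    also have "\<dots> = (\<integral>\<^sup>+x. chainF \<phi> a J' x * c j0 i0 \<partial>PiM J' (\<lambda>_. lborel))"
      by (rule nn_integral_multc[OF mJ', symmetric])
    also have "\<dots> \<le> (\<integral>\<^sup>+x. chainF \<phi> a J' x * (\<integral>\<^sup>+y. \<phi> j0 i0 (prv a x j0 i0) y \<partial>lborel) \<partial>PiM J' (\<lambda>_. lborel))"
      by (intro nn_integral_mono mult_left_mono less.prems(3) j0) simp
    also have "\<dots> = (\<integral>\<^sup>+x. chainF \<phi> a J x \<partial>PiM J (\<lambda>_. lborel))" using E by simp
    finally show ?thesis .
  qed
qed


lemma chain_le:
  assumes meas: "\<And>j i. case_prod (\<phi> j i) \<in> borel_measurable (borel \<Otimes>\<^sub>M borel)"
    and lb: "\<And>j i p. (j, i) \<in> J \<Longrightarrow> (\<integral>\<^sup>+y. \<phi> j i p y \<partial>lborel) \<le> c j i"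
    and "finite J" "lc J"
  shows "(\<integral>\<^sup>+x. chainF \<phi> a J x \<partial>PiM J (\<lambda>_. lborel)) \<le> (\<Prod>q\<in>J. c (fst q) (snd q))"
  using assms(3,4) lb
proof (induction "card J" arbitrary: J rule: less_induct)
  case less
  interpret product_sigma_finite "\<lambda>_. lborel" by standard
  show ?case
  proof (cases "J = {}")
    case True
    then show ?thesis by (simp add: chainF_def PiM_empty nn_integral_count_space_finite)
  next
    case False
    define i0 where "i0 = Max (snd ` J)"
    have "i0 \<in> snd ` J" unfolding i0_def using False less.prems by simp
    then obtain j0 where j0: "(j0, i0) \<in> J" by force
    have mx: "\<forall>q\<in>J. snd q \<le> i0" unfolding i0_def using less.prems by simp
    define J' where "J' = J - {(j0,i0)}"
    have JJ: "J = insert (j0,i0) J'" "(j0,i0) \<notin> J'" "finite J'" using j0 less.prems J'_def by auto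
    have lc': "lc J'" using lc_remove[OF less.prems(2) j0 mx] J'_def by simp
    have cardlt: "card J' < card J" using JJ by simp
    have IH: "(\<integral>\<^sup>+x. chainF \<phi> a J' x \<partial>PiM J' (\<lambda>_. lborel)) \<le> (\<Prod>q\<in>J'. c (fst q) (snd q))"
      using less.hyps[OF cardlt JJ(3) lc'] less.prems(3) JJ by blast
    have mJ: "chainF \<phi> a J \<in> borel_measurable (PiM (insert (j0,i0) J') (\<lambda>_. lborel))"
      using chainF_meas[OF meas less.prems(2)] JJ by simp
    have mJ': "chainF \<phi> a J' \<in> borel_measurable (PiM J' (\<lambda>_. lborel))"
      using chainF_meas[OF meas lc'] .
    have E1: "(\<integral>\<^sup>+x. chainF \<phi> a J x \<partial>PiM J (\<lambda>_. lborel)) =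
       (\<integral>\<^sup>+x. (\<integral>\<^sup>+y. chainF \<phi> a J (x((j0,i0) := y)) \<partial>lborel) \<partial>PiM J' (\<lambda>_. lborel))"
      using product_nn_integral_insert[OF JJ(3,2) mJ] JJ(1) by simp
    also have "\<dots> = (\<integral>\<^sup>+x. chainF \<phi> a J' x * (\<integral>\<^sup>+y. \<phi> j0 i0 (prv a x j0 i0) y \<partial>lborel) \<partial>PiM J' (\<lambda>_. lborel))"
    proof (rule nn_integral_cong)
      fix x
      have "(\<integral>\<^sup>+y. chainF \<phi> a J (x((j0,i0) := y)) \<partial>lborel) =
           (\<integral>\<^sup>+y. chainF \<phi> a J' x * \<phi> j0 i0 (prv a x j0 i0) y \<partial>lborel)"
        using chainF_upd[OF less.prems(2) j0 mx less.prems(1)] J'_def by simp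
      also have "\<dots> = chainF \<phi> a J' x * (\<integral>\<^sup>+y. \<phi> j0 i0 (prv a x j0 i0) y \<partial>lborel)"
      proof (rule nn_integral_cmult)
        have "(\<lambda>y. (prv a x j0 i0, y)) \<in> measurable lborel (borel \<Otimes>\<^sub>M borel)" by simp
        from measurable_compose[OF this meas[of j0 i0]]
        show "\<phi> j0 i0 (prv a x j0 i0) \<in> borel_measurable lborel" by simp
      qed
      finally show "(\<integral>\<^sup>+y. chainF \<phi> a J (x((j0,i0) := y)) \<partial>lborel) =
           chainF \<phi> a J' x * (\<integral>\<^sup>+y. \<phi> j0 i0 (prv a x j0 i0) y \<partial>lborel)" .
    qed
    finally have E: "(\<integral>\<^sup>+x. chainF \<phi> a J x \<partial>PiM J (\<lambda>_. lborel)) =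
      (\<integral>\<^sup>+x. chainF \<phi> a J' x * (\<integral>\<^sup>+y. \<phi> j0 i0 (prv a x j0 i0) y \<partial>lborel) \<partial>PiM J' (\<lambda>_. lborel))" .
    have "(\<integral>\<^sup>+x. chainF \<phi> a J x \<partial>PiM J (\<lambda>_. lborel)) =
      (\<integral>\<^sup>+x. chainF \<phi> a J' x * (\<integral>\<^sup>+y. \<phi> j0 i0 (prv a x j0 i0) y \<partial>lborel) \<partial>PiM J' (\<lambda>_. lborel))" using E .
    also have "\<dots> \<le> (\<integral>\<^sup>+x. chainF \<phi> a J' x * c j0 i0 \<partial>PiM J' (\<lambda>_. lborel))"
      by (intro nn_integral_mono mult_left_mono less.prems(3) j0) simp
    also have "\<dots> = (\<integral>\<^sup>+x. chainF \<phi> a J' x \<partial>PiM J' (\<lambda>_. lborel)) * c j0 i0"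
      by (rule nn_integral_multc[OF mJ'])
    also have "\<dots> \<le> (\<Prod>q\<in>J'. c (fst q) (snd q)) * c j0 i0"
      by (intro mult_right_mono IH) simp
    also have "\<dots> = (\<Prod>q\<in>J. c (fst q) (snd q))"
      using JJ by (simp add: mult.commute)
    finally show ?thesis .
  qed
qed



lemma hk_pos: "t > 0 \<Longrightarrow> heat_kernel t y > 0"
  unfolding heat_kernel_def by simp

lemma e_aux:
  fixes s u v x d :: real
  assumes "s > 0" "u > 0" "v > 0" "v = s + u"
  shows "- x\<^sup>2 / (2 * s) + - (d - x)\<^sup>2 / (2 * u) - - d\<^sup>2 / (2 * v) =
        - (x - d * s / v)\<^sup>2 / (2 * (s * u / v))"
proof -
  have "- x\<^sup>2 / (2 * s) + - (d - x)\<^sup>2 / (2 * u) - - d\<^sup>2 / (2 * v) =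
      (- x\<^sup>2 * u * v - (d - x)\<^sup>2 * s * v + d\<^sup>2 * s * u) / (2 * s * u * v)"
    using assms(1-3) by (simp add: field_simps)
  also have "- x\<^sup>2 * u * v - (d - x)\<^sup>2 * s * v + d\<^sup>2 * s * u = - (x * v - d * s)\<^sup>2"
    using assms(4) by (simp add: power2_eq_square algebra_simps)
  also have "- (x * v - d * s)\<^sup>2 / (2 * s * u * v) = - (x - d * s / v)\<^sup>2 / (2 * (s * u / v))"
    using assms(1-3) by (simp add: field_simps power2_eq_square)
  finally show ?thesis .
qed

lemma r_aux:
  fixes s u v :: real
  assumes "s > 0" "u > 0" "v > 0" "v = s + u"
  shows "2 * pi * (s * u / v) = (2 * pi * s) * (2 * pi * u) / (2 * pi * v)"
  using assms(1-3) by (simp add: field_simps)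

lemma hk_bridge:
  fixes s u x d :: real
  assumes s: "s > 0" and u: "u > 0"
  shows "heat_kernel s x * heat_kernel u (d - x) / heat_kernel (s + u) d =
         normal_density (d * s / (s + u)) (sqrt (s * u / (s + u))) x"
proof -
  have su: "s + u > 0" using s u by simp
  have e: "- x\<^sup>2 / (2 * s) + - (d - x)\<^sup>2 / (2 * u) - - d\<^sup>2 / (2 * (s + u)) =
        - (x - d * s / (s + u))\<^sup>2 / (2 * (s * u / (s + u)))"
    using e_aux[OF s u su refl] .
  have q: "(sqrt (s * u / (s + u)))\<^sup>2 = s * u / (s + u)" using s u su by simp
  have r: "sqrt (2 * pi * (s + u)) / (sqrt (2 * pi * s) * sqrt (2 * pi * u)) =
        1 / sqrt (2 * pi * (s * u / (s + u)))"
  proof -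
    have "sqrt (2 * pi * (s * u / (s + u))) = sqrt ((2 * pi * s) * (2 * pi * u) / (2 * pi * (s + u)))"
      using r_aux[OF s u su refl] by (rule arg_cong)
    also have "\<dots> = sqrt (2 * pi * s) * sqrt (2 * pi * u) / sqrt (2 * pi * (s + u))"
      by (simp only: real_sqrt_divide real_sqrt_mult)
    finally have "sqrt (2 * pi * (s * u / (s + u))) = sqrt (2 * pi * s) * sqrt (2 * pi * u) / sqrt (2 * pi * (s + u))" .
    then show ?thesis by simp
  qed
  have "heat_kernel s x * heat_kernel u (d - x) / heat_kernel (s + u) d =
     (sqrt (2 * pi * (s + u)) / (sqrt (2 * pi * s) * sqrt (2 * pi * u))) *
     (exp (- x\<^sup>2 / (2 * s)) * exp (- (d - x)\<^sup>2 / (2 * u)) / exp (- d\<^sup>2 / (2 * (s + u))))"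
    unfolding heat_kernel_def using s u su by (simp add: field_simps)
  also have "exp (- x\<^sup>2 / (2 * s)) * exp (- (d - x)\<^sup>2 / (2 * u)) / exp (- d\<^sup>2 / (2 * (s + u)))
      = exp (- (x - d * s / (s + u))\<^sup>2 / (2 * (s * u / (s + u))))"
    unfolding e[symmetric] by (simp only: exp_add exp_diff)
  finally show ?thesis unfolding normal_density_def q r by simp
qed

definition ttf :: "real \<Rightarrow> real \<Rightarrow> real list \<Rightarrow> nat \<Rightarrow> real" where
  "ttf l r ts i = (if i = 0 then l else if i \<le> length ts then ts ! (i - 1) else r)"

definition Kf :: "real \<Rightarrow> real \<Rightarrow> real list \<Rightarrow> real \<Rightarrow> nat \<Rightarrow> real \<Rightarrow> real \<Rightarrow> real" where
  "Kf l r ts b i p y = normal_density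
     (p + (b - p) * ((ttf l r ts (Suc i) - ttf l r ts i) / (r - ttf l r ts i)))
     (sqrt ((ttf l r ts (Suc i) - ttf l r ts i) * (r - ttf l r ts (Suc i)) / (r - ttf l r ts i))) y"

lemma Kf_hk:
  assumes "ttf l r ts i < ttf l r ts (Suc i)" "ttf l r ts (Suc i) < r"
  shows "Kf l r ts b i p y = heat_kernel (ttf l r ts (Suc i) - ttf l r ts i) (y - p) *
     heat_kernel (r - ttf l r ts (Suc i)) (b - y) / heat_kernel (r - ttf l r ts i) (b - p)"
proof -
  define s where "s = ttf l r ts (Suc i) - ttf l r ts i"
  define u where "u = r - ttf l r ts (Suc i)"
  have s: "s > 0" and u: "u > 0" using assms by (auto simp: s_def u_def)
  have su: "r - ttf l r ts i = s + u" by (simp add: s_def u_def)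
  have "heat_kernel s (y - p) * heat_kernel u ((b - p) - (y - p)) / heat_kernel (s + u) (b - p) =
     normal_density ((b - p) * s / (s + u)) (sqrt (s * u / (s + u))) (y - p)"
    by (rule hk_bridge[OF s u])
  also have "\<dots> = Kf l r ts b i p y"
    unfolding Kf_def su s_def[symmetric] u_def[symmetric] normal_density_def
    by (simp add: algebra_simps)
  finally show ?thesis unfolding s_def u_def su by simp
qed

lemma fdd_factor:
  assumes inc: "\<And>i. i \<le> length ts \<Longrightarrow> ttf l r ts i < ttf l r ts (Suc i)"
    and ltr: "\<And>i. i \<le> length ts \<Longrightarrow> ttf l r ts i < r"
  shows "bridge_fdd_density l r ts a b y =
     (\<Prod>i<length ts. Kf l r ts b i (if i = 0 then a else y (i - 1)) (y i))"
proof -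
  define m where "m = length ts"
  define tt where "tt = ttf l r ts"
  define yy where "yy = (\<lambda>i. if i = 0 then a else if i \<le> m then y (i - 1) else b)"
  have tt0: "tt 0 = l" and ttm: "tt (Suc m) = r" by (simp_all add: tt_def ttf_def m_def)
  have yy0: "yy 0 = a" and yym: "yy (Suc m) = b" by (simp_all add: yy_def)
  have tel: "(\<Prod>i<n. Kf l r ts b i (yy i) (yy (Suc i))) =
     (\<Prod>i<n. heat_kernel (tt (Suc i) - tt i) (yy (Suc i) - yy i)) * heat_kernel (r - tt n) (b - yy n)
        / heat_kernel (r - l) (b - a)" if "n \<le> m" for n
    using that
  proof (induction n)
    case 0
    have "heat_kernel (r - l) (b - a) > 0" using ltr[of 0] by (intro hk_pos) (simp add: ttf_def)
    then show ?case by (simp add: tt0 yy0)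
  next
    case (Suc n)
    have pos: "heat_kernel (r - tt n) (b - yy n) > 0" using ltr[of n] Suc.prems
      by (intro hk_pos) (simp add: tt_def m_def)
    have K: "Kf l r ts b n (yy n) (yy (Suc n)) = heat_kernel (tt (Suc n) - tt n) (yy (Suc n) - yy n) *
     heat_kernel (r - tt (Suc n)) (b - yy (Suc n)) / heat_kernel (r - tt n) (b - yy n)"
      unfolding tt_def using inc[of n] ltr[of "Suc n"] Suc.prems by (intro Kf_hk) (auto simp: m_def)
    show ?case using Suc.IH Suc.prems pos by (simp add: K field_simps)
  qed
  have "(\<Prod>i<m. Kf l r ts b i (if i = 0 then a else y (i - 1)) (y i)) =
        (\<Prod>i<m. Kf l r ts b i (yy i) (yy (Suc i)))"
    by (rule prod.cong) (auto simp: yy_def)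
  also have "\<dots> = (\<Prod>i<m. heat_kernel (tt (Suc i) - tt i) (yy (Suc i) - yy i)) *
        heat_kernel (tt (Suc m) - tt m) (yy (Suc m) - yy m) / heat_kernel (r - l) (b - a)"
    using tel[of m] by (simp add: ttm yym)
  also have "\<dots> = bridge_fdd_density l r ts a b y"
    unfolding bridge_fdd_density_def Let_def tt_def yy_def ttf_def m_def
    by (simp add: prod.lessThan_Suc)
  finally show ?thesis by (simp add: m_def)
qed



lemma nd_int1: "\<sigma> > 0 \<Longrightarrow> (\<integral>\<^sup>+y. ennreal (normal_density \<mu> \<sigma> y) \<partial>lborel) = 1"
  using integrable_normal_density[of \<sigma>] integral_normal_density[of \<sigma>]
  by (subst nn_integral_eq_integral) (auto simp: normal_density_nonneg)

lemma meas_phi: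
  fixes F G H :: "real \<Rightarrow> real"
  assumes [measurable]: "F \<in> borel_measurable borel" "G \<in> borel_measurable borel" "H \<in> borel_measurable borel"
  shows "(\<lambda>(p, y). ennreal (normal_density (F p) s y) * indicator {G p .. H p} y) \<in> borel_measurable (borel \<Otimes>\<^sub>M borel)"
  unfolding normal_density_def indicator_def atLeastAtMost_iff by measurable

lemma meas_phi2:
  fixes F :: "real \<Rightarrow> real"
  assumes [measurable]: "F \<in> borel_measurable borel"
  shows "(\<lambda>(p, y). ennreal (normal_density (F p) s y)) \<in> borel_measurable (borel \<Otimes>\<^sub>M borel)"
  unfolding normal_density_def by measurable

lemma window_lb:
  fixes \<mu> \<sigma> w D :: real
  assumes s: "\<sigma> > 0" and w: "w > 0" and D: "D \<ge> 0"
  shows "ennreal (2 * w / sqrt (2 * pi) * exp (- (D / \<sigma> + w)\<^sup>2 / 2)) \<le>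
    (\<integral>\<^sup>+y. ennreal (normal_density \<mu> \<sigma> y) * indicator {\<mu> + D - w * \<sigma> .. \<mu> + D + w * \<sigma>} y \<partial>lborel)"
proof -
  define v where "v = 1 / sqrt (2 * pi * \<sigma>\<^sup>2) * exp (- (D + w * \<sigma>)\<^sup>2 / (2 * \<sigma>\<^sup>2))"
  have v0: "v \<ge> 0" unfolding v_def by simp
  have pt: "ennreal v * indicator {\<mu> + D - w * \<sigma> .. \<mu> + D + w * \<sigma>} y \<le>
      ennreal (normal_density \<mu> \<sigma> y) * indicator {\<mu> + D - w * \<sigma> .. \<mu> + D + w * \<sigma>} y" for y
  proof (cases "y \<in> {\<mu> + D - w * \<sigma> .. \<mu> + D + w * \<sigma>}")
    case True
    then have "\<bar>y - \<mu>\<bar> \<le> D + w * \<sigma>" using s w D by auto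
    then have "(y - \<mu>)\<^sup>2 \<le> (D + w * \<sigma>)\<^sup>2"
      by (metis abs_le_square_iff abs_of_nonneg add_nonneg_nonneg D mult_nonneg_nonneg order.strict_implies_order s w)
    then have "(y - \<mu>)\<^sup>2 / (2 * \<sigma>\<^sup>2) \<le> (D + w * \<sigma>)\<^sup>2 / (2 * \<sigma>\<^sup>2)"
      using s by (intro divide_right_mono) auto
    then have "v \<le> normal_density \<mu> \<sigma> y" unfolding v_def normal_density_def
      by (intro mult_left_mono) auto
    then show ?thesis using True by (simp add: ennreal_leI)
  qed simp
  have "(\<integral>\<^sup>+y. ennreal v * indicator {\<mu> + D - w * \<sigma> .. \<mu> + D + w * \<sigma>} y \<partial>lborel)
     = ennreal v * ennreal (2 * w * \<sigma>)"
    using s w by (subst nn_integral_cmult_indicator) (auto simp: algebra_simps)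
  also have "ennreal v * ennreal (2 * w * \<sigma>) = ennreal (2 * w / sqrt (2 * pi) * exp (- (D / \<sigma> + w)\<^sup>2 / 2))"
  proof -
    have a: "(D + w * \<sigma>)\<^sup>2 / (2 * \<sigma>\<^sup>2) = (D / \<sigma> + w)\<^sup>2 / 2"
      using s by (simp add: field_simps power2_eq_square)
    have b: "sqrt (2 * pi * \<sigma>\<^sup>2) = sqrt (2 * pi) * \<sigma>"
    proof -
      have "sqrt (2 * pi * \<sigma>\<^sup>2) = sqrt (2 * pi) * sqrt (\<sigma>\<^sup>2)" by (rule real_sqrt_mult)
      then show ?thesis using s by simp
    qed
    have "v * (2 * w * \<sigma>) = 2 * w / sqrt (2 * pi) * exp (- (D / \<sigma> + w)\<^sup>2 / 2)"
      unfolding v_def b minus_divide_left[symmetric] a using s by (simp add: field_simps)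
    then show ?thesis using s w v0 by (simp add: ennreal_mult'[symmetric])
  qed
  finally have "ennreal (2 * w / sqrt (2 * pi) * exp (- (D / \<sigma> + w)\<^sup>2 / 2)) =
       (\<integral>\<^sup>+y. ennreal v * indicator {\<mu> + D - w * \<sigma> .. \<mu> + D + w * \<sigma>} y \<partial>lborel)" by simp
  also have "\<dots> \<le> (\<integral>\<^sup>+y. ennreal (normal_density \<mu> \<sigma> y) * indicator {\<mu> + D - w * \<sigma> .. \<mu> + D + w * \<sigma>} y \<partial>lborel)"
    by (intro nn_integral_mono pt)
  finally show ?thesis .
qed



primrec cs :: "(nat \<Rightarrow> real) \<Rightarrow> (nat \<Rightarrow> real) \<Rightarrow> real \<Rightarrow> real \<Rightarrow> nat \<Rightarrow> real" where
  "cs \<rho> D a b 0 = a"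
| "cs \<rho> D a b (Suc i) = cs \<rho> D a b i + (b - cs \<rho> D a b i) * \<rho> i + D i"

lemma cs_gap:
  assumes r: "\<And>i. 0 \<le> \<rho> i \<and> \<rho> i \<le> 1" and "a1 - a2 \<ge> G" "b1 - b2 \<ge> G"
  shows "cs \<rho> D a1 b1 n - cs \<rho> D a2 b2 n \<ge> G"
proof (induction n)
  case 0 then show ?case using assms by simp
next
  case (Suc n)
  define d where "d = cs \<rho> D a1 b1 n - cs \<rho> D a2 b2 n"
  have e: "cs \<rho> D a1 b1 (Suc n) - cs \<rho> D a2 b2 (Suc n) = d * (1 - \<rho> n) + (b1 - b2) * \<rho> n"
    by (simp add: d_def algebra_simps)
  have "d * (1 - \<rho> n) \<ge> G * (1 - \<rho> n)" using Suc r[of n] by (intro mult_right_mono) (auto simp: d_def)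
  moreover have "(b1 - b2) * \<rho> n \<ge> G * \<rho> n" using assms r[of n] by (intro mult_right_mono) auto
  ultimately show ?case unfolding e by (simp add: algebra_simps)
qed

lemma cs_dev:
  assumes r: "\<And>i. 0 \<le> \<rho> i \<and> \<rho> i \<le> 1" and v0: "v 0 = a"
    and w: "\<And>i. i < n \<Longrightarrow> \<bar>v (Suc i) - (v i + (b - v i) * \<rho> i) - D i\<bar> \<le> h i"
  shows "\<bar>v n - cs \<rho> D a b n\<bar> \<le> (\<Sum>i<n. h i)"
  using w
proof (induction n)
  case 0 then show ?case using v0 by simp
next
  case (Suc n)
  define d where "d = v n - cs \<rho> D a b n"
  have e: "v (Suc n) - cs \<rho> D a b (Suc n) = (v (Suc n) - (v n + (b - v n) * \<rho> n) - D n) + d * (1 - \<rho> n)"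
    by (simp add: d_def algebra_simps)
  have "\<bar>d * (1 - \<rho> n)\<bar> \<le> \<bar>d\<bar>" using r[of n] by (simp add: abs_mult mult_left_le)
  moreover have "\<bar>d\<bar> \<le> (\<Sum>i<n. h i)" using Suc by (simp add: d_def)
  moreover have "\<bar>v (Suc n) - (v n + (b - v n) * \<rho> n) - D n\<bar> \<le> h n" using Suc.prems by simp
  ultimately show ?case unfolding e by simp
qed

lemma mono_tt:
  fixes tt :: "nat \<Rightarrow> real"
  assumes "\<And>i. i < n \<Longrightarrow> tt i < tt (Suc i)" "k \<le> n"
  shows "tt 0 \<le> tt k"
  using assms(2)
proof (induction k)
  case (Suc k)
  have "tt k < tt (Suc k)" using assms(1) Suc.prems by simp
  then show ?case using Suc.IH Suc.prems by simp
qed simp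

lemma cs_z:
  fixes tt :: "nat \<Rightarrow> real"
  assumes inc: "\<And>i. i < n \<Longrightarrow> tt i < tt (Suc i)" and ltr: "tt n < r" and S: "S \<ge> 0"
    and rho: "\<And>i. \<rho> i = (tt (Suc i) - tt i) / (r - tt i)"
    and DD: "\<And>i. D i = S * ((tt (Suc i) - tt i) * (r - tt (Suc i)) / (r - tt i))"
  shows "cs \<rho> D 0 0 n \<ge> S * (r - tt n) * (tt n - tt 0) / (r - tt 0)"
  using inc ltr
proof (induction n)
  case 0 then show ?case by simp
next
  case (Suc n)
  have mono: "tt 0 \<le> tt n" using mono_tt[of n tt n] Suc.prems(1) by simp
  define s where "s = tt (Suc n) - tt n"
  define u where "u = r - tt (Suc n)"
  define L where "L = r - tt 0"
  have s: "s > 0" using Suc.prems(1)[of n] s_def by simp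
  have u: "u > 0" using Suc.prems(2) u_def by simp
  have U: "r - tt n = s + u" by (simp add: s_def u_def)
  have LU: "s + u \<le> L" using mono by (simp add: L_def s_def u_def)
  have L: "L > 0" using s u LU by simp
  have IH: "cs \<rho> D 0 0 n \<ge> S * (s + u) * (tt n - tt 0) / L"
  proof -
    have "tt n < r" using s u U by simp
    then have "cs \<rho> D 0 0 n \<ge> S * (r - tt n) * (tt n - tt 0) / (r - tt 0)"
      using Suc.IH Suc.prems(1) by simp
    then show ?thesis using U L_def by simp
  qed
  define V where "V = s + u"
  have V: "V > 0" using s u V_def by simp
  have sV: "tt (Suc n) - tt n = s" "r - tt n = V" "r - tt (Suc n) = u" using U by (simp_all add: s_def V_def u_def)
  have rn: "\<rho> n = s / V" using rho[of n] unfolding sV .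
  have Dn: "D n = S * (s * u / V)" using DD[of n] unfolding sV .
  have uV: "u / V = 1 - s / V" using V V_def by (simp add: field_simps)
  have e1: "cs \<rho> D 0 0 (Suc n) = cs \<rho> D 0 0 n * (u / V) + S * (s * u / V)"
    by (simp add: rn Dn uV algebra_simps)
  have t1: "cs \<rho> D 0 0 n * (u / V) \<ge> S * V * (tt n - tt 0) / L * (u / V)"
    using IH u V unfolding V_def[symmetric] by (intro mult_right_mono) auto
  have t2: "S * (s * u / V) \<ge> S * (s * u / L)"
    using s u LU V S unfolding V_def[symmetric] by (intro mult_left_mono divide_left_mono) auto
  have e2': "S * V * (tt n - tt 0) / L * (u / V) + S * (s * u / L) =
     S * u * (tt n - tt 0 + s) / L" using V L by (simp add: field_simps)
  have e2: "S * V * (tt n - tt 0) / L * (u / V) + S * (s * u / L) =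
     S * u * (tt (Suc n) - tt 0) / L" unfolding e2' by (simp add: s_def)
  have "cs \<rho> D 0 0 (Suc n) \<ge> S * u * (tt (Suc n) - tt 0) / L"
    using t1 t2 e1 e2 by linarith
  then show ?case by (simp add: u_def L_def)
qed



lemma min_harm:
  fixes a b y K :: real
  assumes "a > 0" "b > 0" "K \<ge> 0" "y \<le> K * a" "y \<le> K * b"
  shows "y \<le> 2 * K * a * b / (a + b)"
proof (cases "a \<le> b")
  case True
  have "K * a \<le> 2 * K * a * b / (a + b)"
    using assms True by (simp add: field_simps) (simp add: mult_left_mono mult_right_mono algebra_simps
        flip: distrib_left)
  then show ?thesis using assms by linarith
next
  case False
  have "K * b \<le> 2 * K * a * b / (a + b)"
    using assms False by (simp add: field_simps) (simp add: mult_left_mono mult_right_mono algebra_simps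
        flip: distrib_left)
  then show ?thesis using assms by linarith
qed

lemma cost_ineq:
  fixes eps T S X s Lc :: real
  assumes eps: "eps > 0" and T: "T \<ge> 1" and S: "S \<ge> 0" and X: "0 < X" "X \<le> s"
    and Lc: "Lc = \<bar>ln (2 * eps * exp (- eps\<^sup>2) / sqrt (2 * pi))\<bar>"
  shows "exp (- (Lc + T) - S\<^sup>2 * s) \<le> 2 * (eps / sqrt T) / sqrt (2 * pi) * exp (- ((S * X) / sqrt X + eps / sqrt T)\<^sup>2 / 2)"
proof -
  define q1 where "q1 = 2 * eps * exp (- eps\<^sup>2) / sqrt (2 * pi)"
  define w where "w = eps / sqrt T"
  define sg where "sg = sqrt X"
  have q1: "q1 > 0" using eps by (simp add: q1_def)
  have sg: "sg > 0" using X by (simp add: sg_def)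
  have Xs: "X = sg * sg" using X by (simp add: sg_def)
  have DX: "S * X / sqrt X = S * sg" unfolding sg_def[symmetric] Xs using sg by simp
  have w0: "w \<ge> 0" using eps T by (simp add: w_def)
  have w2: "w\<^sup>2 \<le> eps\<^sup>2"
  proof -
    have "w\<^sup>2 = eps\<^sup>2 / T" using T by (simp add: w_def power_divide)
    also have "\<dots> \<le> eps\<^sup>2" using T by (simp add: divide_le_eq) (simp add: mult_le_cancel_left1)
    finally show ?thesis .
  qed
  have sq1: "(S * sg + w)\<^sup>2 \<le> 2 * (S * sg)\<^sup>2 + 2 * w\<^sup>2"
  proof -
    have "0 \<le> (S * sg - w)\<^sup>2" by simp
    then show ?thesis unfolding power2_sum power2_diff by linarith
  qed
  have "(S * sg)\<^sup>2 = S\<^sup>2 * X" using X by (simp add: sg_def power_mult_distrib)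
  also have "\<dots> \<le> S\<^sup>2 * s" using X by (intro mult_left_mono) auto
  finally have "(S * sg + w)\<^sup>2 / 2 \<le> S\<^sup>2 * s + eps\<^sup>2" using sq1 w2 by linarith
  then have E1: "exp (- S\<^sup>2 * s - eps\<^sup>2) \<le> exp (- (S * sg + w)\<^sup>2 / 2)" by simp
  have E2: "exp (- Lc) \<le> q1"
  proof -
    have "- Lc \<le> ln q1" using Lc by (simp add: q1_def)
    then have "exp (- Lc) \<le> exp (ln q1)" by simp
    then show ?thesis using q1 by simp
  qed
  have E3: "exp (- T) \<le> 1 / sqrt T"
  proof -
    have sT: "sqrt T \<ge> 1" using T by simp
    have "sqrt T * 1 \<le> sqrt T * sqrt T" using sT by (intro mult_left_mono) auto
    then have "sqrt T \<le> T" using T by simp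
    also have "T \<le> exp T" using exp_ge_add_one_self[of T] by linarith
    finally have "sqrt T \<le> exp T" .
    then show ?thesis using T by (simp add: exp_minus field_simps)
  qed
  have "exp (- (Lc + T) - S\<^sup>2 * s) = exp (- Lc) * exp (- T) * exp (- S\<^sup>2 * s - eps\<^sup>2) * exp (eps\<^sup>2)"
    by (simp add: exp_add[symmetric] exp_diff[symmetric])
  also have "\<dots> \<le> q1 * (1 / sqrt T) * exp (- (S * sg + w)\<^sup>2 / 2) * exp (eps\<^sup>2)"
    by (intro mult_right_mono mult_mono E1 E2 E3) (use q1 T in auto)
  also have "\<dots> = 2 * w / sqrt (2 * pi) * exp (- (S * sg + w)\<^sup>2 / 2)"
    unfolding q1_def w_def by (simp add: exp_minus field_simps)
  finally show ?thesis unfolding DX w_def by simp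
qed

lemma core:
  fixes k :: nat and b0 b1 lam0 lam1 mu T l r eps Lc :: real
    and am ap :: "nat \<Rightarrow> real" and g :: "real \<Rightarrow> real" and P :: "real set"
  assumes k1: "k \<ge> 1" and b0: "b0 > 0" and b1: "b1 > 0" and lam0: "lam0 > 0" and lam1: "lam1 > 0"
    and mu0: "0 < mu" and mu1: "mu < 1" and T1: "T \<ge> 1" and lr: "l < r"
    and gl: "g l = 0" and gr: "g r = 0" and fin: "finite P"
    and Pl: "P \<subseteq> {l<..<l + sqrt T}" and Pr: "P \<subseteq> {l<..<r}"
    and cardP: "real (card P) \<le> b0 * T"
    and lip: "\<forall>x\<in>{l..r}. \<forall>y\<in>{l..r}. \<bar>g x - g y\<bar> \<le> b1 * T * \<bar>x - y\<bar>"
    and gaps: "\<forall>j\<in>{1..<k}. am j - am (j+1) \<ge> lam0 * sqrt T \<and> ap j - ap (j+1) \<ge> lam0 * sqrt T"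
    and amk: "am k - g l \<ge> lam1 * T" and apk: "ap k - g r \<ge> lam1 * T"
    and eps_def: "eps = (1 - mu) * min lam0 lam1 / (1 + b0)"
    and Lc_def: "Lc = \<bar>ln (2 * eps * exp (- eps\<^sup>2) / sqrt (2 * pi))\<bar>"
  shows "exp (- (real k * (b0 * T * (Lc + T) + (2 * b1 * T)\<^sup>2 * sqrt T))) \<le> Pfree_H k l r am ap P g mu lam0 lam1 T"
proof -
  define ts where "ts = sorted_list_of_set P"
  define m where "m = length ts"
  define I where "I = {1..k} \<times> {..<m}"
  define tt where "tt = ttf l r ts"
  have setts: "set ts = P" using fin by (simp add: ts_def)
  have mP: "m = card P" by (simp add: m_def ts_def)
  have sw: "sorted_wrt (<) ts" by (simp add: ts_def)
  have tsP: "ts ! i \<in> P" if "i < m" for i using that setts m_def nth_mem by blast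
  have tt0: "tt 0 = l" by (simp add: tt_def ttf_def)
  have ttS: "tt (Suc i) = ts ! i" if "i < m" for i using that by (simp add: tt_def ttf_def m_def)
  have ttbig: "tt i = r" if "i > m" for i using that by (simp add: tt_def ttf_def m_def)
  have ttm1: "tt (Suc m) = r" by (simp add: tt_def ttf_def m_def)
  have ltr: "tt i < r" if "i \<le> m" for i
  proof (cases i)
    case 0 then show ?thesis using lr tt0 by simp
  next
    case (Suc i') then show ?thesis using ttS[of i'] tsP[of i'] Pr that by auto
  qed
  have inc: "tt i < tt (Suc i)" if "i \<le> m" for i
  proof (cases "i = m")
    case True then show ?thesis using ltr[of m] ttm1 by simp
  next
    case False
    then have im: "i < m" using that by simp
    show ?thesis
    proof (cases i)
      case 0 then show ?thesis using tt0 ttS[of 0] tsP[of 0] Pr im by auto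
    next
      case (Suc i')
      have "ts ! i' < ts ! i" using sw Suc im by (intro sorted_wrt_nth_less) (auto simp: m_def)
      then show ?thesis using ttS[of i'] ttS[of i] Suc im by simp
    qed
  qed
  have tle: "tt i \<le> tt (Suc i)" for i
    using inc[of i] ttbig[of i] ttbig[of "Suc i"] ttm1 by (cases "i \<le> m") (auto simp: not_le)
  have tler: "tt i \<le> r" for i
    using ltr[of i] ttbig[of i] by (cases "i \<le> m") auto
  have sumT: "tt m - tt 0 \<le> sqrt T"
  proof (cases m)
    case 0 then show ?thesis using T1 by simp
  next
    case (Suc m')
    then show ?thesis using ttS[of m'] tsP[of m'] Pl tt0 by auto
  qed
  have mb: "real m \<le> b0 * T" using cardP mP by simp

  define s where "s i = tt (Suc i) - tt i" for i
  define X where "X i = s i * (r - tt (Suc i)) / (r - tt i)" for i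
  define sg where "sg i = sqrt (X i)" for i
  define \<rho> where "\<rho> i = s i / (r - tt i)" for i
  define S where "S = 2 * b1 * T"
  define w where "w = eps / sqrt T"
  define D where "D i = S * X i" for i
  have S0: "S \<ge> 0" using b1 T1 by (simp add: S_def)
  have eps0: "eps > 0" using mu1 lam0 lam1 b0 by (simp add: eps_def)
  have sqT: "sqrt T \<ge> 1" using T1 by simp
  have w0: "w > 0" using eps0 T1 by (simp add: w_def)
  have rho01: "0 \<le> \<rho> i \<and> \<rho> i \<le> 1" for i
    using tle[of i] tler[of "Suc i"] by (auto simp: \<rho>_def s_def divide_le_eq_1)
  have X0: "X i \<ge> 0" for i
    using tle[of i] tler[of "Suc i"] tler[of i] by (auto simp: X_def s_def)
  have spos: "s i > 0" if "i < m" for i using inc[of i] that by (simp add: s_def)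
  have Xpos: "X i > 0" if "i < m" for i
    using spos[OF that] ltr[of "Suc i"] ltr[of i] that by (simp add: X_def)
  have Xle: "X i \<le> s i" for i
  proof (cases "tt i < r")
    case True
    have "s i * (r - tt (Suc i)) \<le> s i * (r - tt i)" using tle[of i] by (intro mult_left_mono) (auto simp: s_def)
    then show ?thesis unfolding X_def using True by (simp add: divide_le_eq)
  next
    case False then show ?thesis using tler[of i] tle[of i] by (simp add: X_def s_def)
  qed
  have sgpos: "sg i > 0" if "i < m" for i using Xpos[OF that] by (simp add: sg_def)

  define \<phi>' where "\<phi>' j i p y = ennreal (normal_density (p + (ap j - p) * \<rho> i) (sg i) y)" for j i p y
  define \<phi> where "\<phi> j i p y = \<phi>' j i p y *
      indicator {p + (ap j - p) * \<rho> i + D i - w * sg i .. p + (ap j - p) * \<rho> i + D i + w * sg i} y" for j i p y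
  have meas: "case_prod (\<phi> j i) \<in> borel_measurable (borel \<Otimes>\<^sub>M borel)" for j i
  proof -
    have "(\<lambda>(p, y). ennreal (normal_density ((\<lambda>p. p + (ap j - p) * \<rho> i) p) (sg i) y) *
        indicator {(\<lambda>p. p + (ap j - p) * \<rho> i + D i - w * sg i) p .. (\<lambda>p. p + (ap j - p) * \<rho> i + D i + w * sg i) p} y)
        \<in> borel_measurable (borel \<Otimes>\<^sub>M borel)"
      by (rule meas_phi) simp_all
    then show ?thesis by (simp add: \<phi>_def \<phi>'_def[abs_def] split_beta')
  qed
  have meas': "case_prod (\<phi>' j i) \<in> borel_measurable (borel \<Otimes>\<^sub>M borel)" for j i
  proof -
    have "(\<lambda>(p, y). ennreal (normal_density ((\<lambda>p. p + (ap j - p) * \<rho> i) p) (sg i) y))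
        \<in> borel_measurable (borel \<Otimes>\<^sub>M borel)"
      by (rule meas_phi2) simp
    then show ?thesis by (simp add: \<phi>'_def[abs_def] split_beta')
  qed
  have lcI: "lc I" unfolding lc_def I_def by auto
  have finI: "finite I" unfolding I_def by simp
  have Kf_eq: "Kf l r ts b i p y = normal_density (p + (b - p) * \<rho> i) (sg i) y" for b i p y
    by (simp add: Kf_def \<rho>_def sg_def X_def s_def tt_def)
  define fx where "fx x = ennreal (\<Prod>j\<in>{1..k}. bridge_fdd_density l r ts (am j) (ap j) (\<lambda>i. x (j, i)))" for x
  have ffac: "fx x = chainF \<phi>' am I x" for x
  proof -
    have "bridge_fdd_density l r ts (am j) (ap j) (\<lambda>i. x (j, i)) =
        (\<Prod>i<m. normal_density (prv am x j i + (ap j - prv am x j i) * \<rho> i) (sg i) (x (j, i)))" for j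
    proof -
      have "bridge_fdd_density l r ts (am j) (ap j) (\<lambda>i. x (j, i)) =
        (\<Prod>i<length ts. Kf l r ts (ap j) i (if i = 0 then am j else x (j, i - 1)) (x (j, i)))"
        by (rule fdd_factor) (use inc ltr in \<open>auto simp: tt_def m_def\<close>)
      then show ?thesis by (simp add: Kf_eq prv_def m_def)
    qed
    then have "fx x = ennreal (\<Prod>j\<in>{1..k}. \<Prod>i<m. normal_density (prv am x j i + (ap j - prv am x j i) * \<rho> i) (sg i) (x (j, i)))"
      by (simp add: fx_def)
    also have "\<dots> = ennreal (\<Prod>q\<in>I. normal_density (prv am x (fst q) (snd q) + (ap (fst q) - prv am x (fst q) (snd q)) * \<rho> (snd q)) (sg (snd q)) (x q))"
      by (simp add: I_def prod.cartesian_product split_def)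
    also have "\<dots> = chainF \<phi>' am I x"
      unfolding chainF_def \<phi>'_def by (subst prod_ennreal) auto
    finally show ?thesis .
  qed
  have fx_meas: "fx \<in> borel_measurable (PiM I (\<lambda>_. lborel))"
  proof -
    have "fx = chainF \<phi>' am I" using ffac by (simp add: fun_eq_iff)
    then show ?thesis using chainF_meas[OF meas' lcI] by simp
  qed
  define M where "M = free_fdd k l r am ap ts"
  have M_eq: "M = density (PiM I (\<lambda>_. lborel)) fx"
    by (simp add: M_def free_fdd_def I_def m_def fx_def[abs_def])
  define Hs where "Hs = {x \<in> space M. \<forall>i < length ts.
            (\<forall>j \<in> {1..<k}. x (j, i) - x (j+1, i) \<ge> mu * lam0 * sqrt T) \<and>
            x (k, i) - g (ts ! i) \<ge> mu * lam1 * T}"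
  have PH: "Pfree_H k l r am ap P g mu lam0 lam1 T = measure M Hs"
    unfolding Pfree_H_def Let_def ts_def[symmetric] M_def[symmetric] Hs_def[symmetric] ..
  have Hs_sets: "Hs \<in> sets (PiM I (\<lambda>_. lborel))"
  proof -
    have "Measurable.pred (PiM I (\<lambda>_. lborel)) (\<lambda>x. \<forall>i \<in> {..<length ts}.
            (\<forall>j \<in> {1..<k}. x (j, i) - x (j+1, i) \<ge> mu * lam0 * sqrt T) \<and>
            x (k, i) - g (ts ! i) \<ge> mu * lam1 * T)"
    proof (rule pred_intros_countable_bounded(3), rule pred_intros_logic(3))
      fix i assume i: "i \<in> {..<length ts}"
      show "Measurable.pred (PiM I (\<lambda>_. lborel)) (\<lambda>x. \<forall>j \<in> {1..<k}. x (j, i) - x (j+1, i) \<ge> mu * lam0 * sqrt T)"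
      proof (rule pred_intros_countable_bounded(3))
        fix j assume j: "j \<in> {1..<k}"
        have "(j, i) \<in> I" "(j+1, i) \<in> I" using i j by (auto simp: I_def m_def)
        then show "Measurable.pred (PiM I (\<lambda>_. lborel)) (\<lambda>x. x (j, i) - x (j+1, i) \<ge> mu * lam0 * sqrt T)"
          by measurable
      qed
      have "(k, i) \<in> I" using i k1 by (auto simp: I_def m_def)
      then show "Measurable.pred (PiM I (\<lambda>_. lborel)) (\<lambda>x. x (k, i) - g (ts ! i) \<ge> mu * lam1 * T)"
        by measurable
    qed
    moreover have "space M = space (PiM I (\<lambda>_. lborel))" by (simp add: M_eq)
    ultimately show ?thesis unfolding Hs_def pred_def by (simp only: Ball_def lessThan_iff)
  qed
  have emH: "emeasure M Hs = (\<integral>\<^sup>+x. fx x * indicator Hs x \<partial>PiM I (\<lambda>_. lborel))"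
    unfolding M_eq by (rule emeasure_density[OF fx_meas Hs_sets])
  have int_fx: "(\<integral>\<^sup>+x. fx x \<partial>PiM I (\<lambda>_. lborel)) \<le> 1"
  proof -
    have "(\<integral>\<^sup>+x. chainF \<phi>' am I x \<partial>PiM I (\<lambda>_. lborel)) \<le> (\<Prod>q\<in>I. (\<lambda>j i. 1) (fst q) (snd q))"
    proof (rule chain_le[OF meas' _ finI lcI])
      fix j i p assume "(j, i) \<in> I"
      then have "i < m" by (simp add: I_def)
      then show "(\<integral>\<^sup>+y. \<phi>' j i p y \<partial>lborel) \<le> 1"
        using sgpos by (simp add: \<phi>'_def nd_int1)
    qed
    then show ?thesis using ffac by simp
  qed
  have emH_le: "emeasure M Hs \<le> 1"
  proof -
    have "emeasure M Hs \<le> (\<integral>\<^sup>+x. fx x \<partial>PiM I (\<lambda>_. lborel))"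
      unfolding emH by (intro nn_integral_mono) (simp add: indicator_def)
    then show ?thesis using int_fx by simp
  qed
  define c where "c j i = ennreal (exp (- (Lc + T) - S\<^sup>2 * s i))" for j :: nat and i
  have c_le: "c j i \<le> (\<integral>\<^sup>+y. \<phi> j i p y \<partial>lborel)" if "(j, i) \<in> I" for j i p
  proof -
    have im: "i < m" using that by (simp add: I_def)
    have D0: "D i \<ge> 0" using S0 X0[of i] by (simp add: D_def)
    have "exp (- (Lc + T) - S\<^sup>2 * s i) \<le> 2 * w / sqrt (2 * pi) * exp (- (D i / sg i + w)\<^sup>2 / 2)"
      using cost_ineq[OF eps0 T1 S0 Xpos[OF im] Xle[of i] Lc_def] by (simp add: D_def sg_def w_def)
    then have "c j i \<le> ennreal (2 * w / sqrt (2 * pi) * exp (- (D i / sg i + w)\<^sup>2 / 2))"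
      unfolding c_def by (rule ennreal_leI)
    also have "\<dots> \<le> (\<integral>\<^sup>+y. ennreal (normal_density (p + (ap j - p) * \<rho> i) (sg i) y) *
         indicator {p + (ap j - p) * \<rho> i + D i - w * sg i .. p + (ap j - p) * \<rho> i + D i + w * sg i} y \<partial>lborel)"
      by (rule window_lb[OF sgpos[OF im] w0 D0])
    also have "\<dots> = (\<integral>\<^sup>+y. \<phi> j i p y \<partial>lborel)" by (simp add: \<phi>_def \<phi>'_def)
    finally show ?thesis .
  qed
  have chain: "(\<Prod>q\<in>I. c (fst q) (snd q)) \<le> (\<integral>\<^sup>+x. chainF \<phi> am I x \<partial>PiM I (\<lambda>_. lborel))"
    by (rule chain_ge[OF meas _ finI lcI]) (rule c_le)
  have sum_s: "(\<Sum>i<m. s i) = tt m - tt 0"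
    unfolding s_def by (rule sum_lessThan_telescope)
  define Emax where "Emax = eps * (1 + b0) * sqrt T / 2"
  have epsb: "eps * (1 + b0) = (1 - mu) * min lam0 lam1" using b0 by (simp add: eps_def)
  have sTT: "sqrt T \<le> T"
  proof -
    have "sqrt T * 1 \<le> sqrt T * sqrt T" using sqT by (intro mult_left_mono) auto
    then show ?thesis using T1 by simp
  qed
  have Em1: "2 * Emax \<le> (1 - mu) * lam0 * sqrt T"
  proof -
    have "2 * Emax = (1 - mu) * min lam0 lam1 * sqrt T" by (simp add: Emax_def epsb)
    also have "\<dots> \<le> (1 - mu) * lam0 * sqrt T" using mu1 T1 by (intro mult_right_mono mult_left_mono) auto
    finally show ?thesis .
  qed
  have Em2: "Emax \<le> (1 - mu) * lam1 * T"
  proof -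
    have "2 * Emax = (1 - mu) * min lam0 lam1 * sqrt T" by (simp add: Emax_def epsb)
    also have "\<dots> \<le> (1 - mu) * lam1 * T" using mu1 lam1 lam0 T1 sTT by (intro mult_mono mult_left_mono) auto
    moreover have "0 \<le> (1 - mu) * lam1 * T" using mu1 lam1 T1 by simp
    ultimately show ?thesis by linarith
  qed
  have devsum: "(\<Sum>l<m. w * sg l) \<le> Emax"
  proof -
    have "sg l \<le> (s l + 1) / 2" for l
    proof -
      have "0 \<le> (sg l - 1)\<^sup>2" by simp
      moreover have "(sg l)\<^sup>2 = X l" using X0[of l] by (simp add: sg_def)
      ultimately show ?thesis using Xle[of l] unfolding power2_diff by simp
    qed
    then have "(\<Sum>l<m. w * sg l) \<le> (\<Sum>l<m. w * ((s l + 1) / 2))"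
      using w0 by (intro sum_mono mult_left_mono) auto
    also have "\<dots> = w * ((\<Sum>l<m. s l) + real m) / 2"
      by (simp add: sum_distrib_left[symmetric] sum.distrib add_divide_distrib sum_divide_distrib[symmetric])
    also have "\<dots> \<le> w * (sqrt T + b0 * T) / 2"
      using sum_s sumT mb w0 by (intro divide_right_mono mult_left_mono) auto
    also have "\<dots> = eps * (1 + b0 * sqrt T) / 2"
    proof -
      have "T = sqrt T * sqrt T" using T1 by simp
      then have "w * T = eps * sqrt T" unfolding w_def using sqT by (metis nonzero_mult_div_cancel_left times_divide_eq_left
            mult.commute not_one_le_zero real_sqrt_eq_zero_cancel_iff)
      moreover have "w * sqrt T = eps" unfolding w_def using sqT by simp
      ultimately show ?thesis by (simp add: algebra_simps)
    qed
    also have "\<dots> \<le> Emax" unfolding Emax_def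
      using eps0 sqT b0 by (intro divide_right_mono mult_left_mono) (auto simp: algebra_simps)
    finally show ?thesis .
  qed
  have pw: "chainF \<phi> am I x \<le> fx x * indicator Hs x" if xs: "x \<in> space (PiM I (\<lambda>_. lborel))" for x
  proof (cases "\<forall>q\<in>I. x q \<in> {prv am x (fst q) (snd q) + (ap (fst q) - prv am x (fst q) (snd q)) * \<rho> (snd q) + D (snd q) - w * sg (snd q) ..
       prv am x (fst q) (snd q) + (ap (fst q) - prv am x (fst q) (snd q)) * \<rho> (snd q) + D (snd q) + w * sg (snd q)}")
    case True
    have cf: "chainF \<phi> am I x = chainF \<phi>' am I x"
      unfolding chainF_def \<phi>_def using True by (intro prod.cong) auto
    have dev: "\<bar>x (j, i) - cs \<rho> D (am j) (ap j) (Suc i)\<bar> \<le> Emax" if j: "j \<in> {1..k}" and i: "i < m" for j i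
    proof -
      define v where "v n = (if n = 0 then am j else x (j, n - 1))" for n
      have "\<bar>v (Suc i) - cs \<rho> D (am j) (ap j) (Suc i)\<bar> \<le> (\<Sum>l<Suc i. w * sg l)"
      proof (rule cs_dev[OF rho01])
        show "v 0 = am j" by (simp add: v_def)
        fix l assume l: "l < Suc i"
        then have "(j, l) \<in> I" using i j by (auto simp: I_def)
        then have "x (j, l) \<in> {prv am x j l + (ap j - prv am x j l) * \<rho> l + D l - w * sg l ..
            prv am x j l + (ap j - prv am x j l) * \<rho> l + D l + w * sg l}" using True by fastforce
        moreover have "prv am x j l = v l" by (simp add: prv_def v_def)
        ultimately show "\<bar>v (Suc l) - (v l + (ap j - v l) * \<rho> l) - D l\<bar> \<le> w * sg l"
          by (simp add: v_def abs_le_iff)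
      qed
      also have "(\<Sum>l<Suc i. w * sg l) \<le> (\<Sum>l<m. w * sg l)"
        using i w0 sgpos by (intro sum_mono2) (auto intro: less_imp_le)
      finally show ?thesis using devsum by (simp add: v_def)
    qed
    have gapc: "cs \<rho> D (am j) (ap j) n - cs \<rho> D (am (j+1)) (ap (j+1)) n \<ge> lam0 * sqrt T" if "j \<in> {1..<k}" for j n
      using gaps that by (intro cs_gap[OF rho01]) auto
    have kc: "cs \<rho> D (am k) (ap k) n - cs \<rho> D 0 0 n \<ge> lam1 * T" for n
      using amk apk gl gr by (intro cs_gap[OF rho01]) auto
    have zc: "cs \<rho> D 0 0 (Suc i) \<ge> S * (r - tt (Suc i)) * (tt (Suc i) - tt 0) / (r - tt 0)" if "i < m" for i
      by (rule cs_z) (use inc ltr that S0 in \<open>auto simp: \<rho>_def D_def X_def s_def\<close>)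
    have gb: "g (ts ! i) \<le> S * (r - tt (Suc i)) * (tt (Suc i) - tt 0) / (r - tt 0)" if i: "i < m" for i
    proof -
      define t where "t = ts ! i"
      have t: "l < t" "t < r" using tsP[OF i] Pr by (auto simp: t_def)
      have tin: "t \<in> {l..r}" "l \<in> {l..r}" "r \<in> {l..r}" using t by auto
      have L1: "\<bar>g t - g l\<bar> \<le> b1 * T * \<bar>t - l\<bar>" using lip tin by blast
      have L2: "\<bar>g t - g r\<bar> \<le> b1 * T * \<bar>t - r\<bar>" using lip tin by blast
      have "g t \<le> b1 * T * (t - l)" using L1 t gl by (simp add: abs_le_iff)
      moreover have "g t \<le> b1 * T * (r - t)" using L2 t gr by (simp add: abs_le_iff abs_minus_commute)
      ultimately have "g t \<le> 2 * (b1 * T) * (t - l) * (r - t) / ((t - l) + (r - t))"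
        using t b1 T1 by (intro min_harm) auto
      then show ?thesis using ttS[OF i] tt0 by (simp add: t_def S_def algebra_simps)
    qed
    have "x \<in> Hs"
    proof -
      have sp: "x \<in> space M" using xs by (simp add: M_eq)
      have "(\<forall>j \<in> {1..<k}. x (j, i) - x (j+1, i) \<ge> mu * lam0 * sqrt T) \<and>
            x (k, i) - g (ts ! i) \<ge> mu * lam1 * T" if i: "i < length ts" for i
      proof (intro conjI ballI)
        have im: "i < m" using i by (simp add: m_def)
        fix j assume j: "j \<in> {1..<k}"
        have d1: "\<bar>x (j, i) - cs \<rho> D (am j) (ap j) (Suc i)\<bar> \<le> Emax" using dev[of j i] j im by auto
        have d2: "\<bar>x (j+1, i) - cs \<rho> D (am (j+1)) (ap (j+1)) (Suc i)\<bar> \<le> Emax" using dev[of "j+1" i] j im by auto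
        have gg: "cs \<rho> D (am j) (ap j) (Suc i) - cs \<rho> D (am (j+1)) (ap (j+1)) (Suc i) \<ge> lam0 * sqrt T"
          using gapc[OF j] .
        have eq: "mu * lam0 * sqrt T = lam0 * sqrt T - (1 - mu) * lam0 * sqrt T" by (simp add: algebra_simps)
        show "x (j, i) - x (j+1, i) \<ge> mu * lam0 * sqrt T"
          using d1 d2 gg Em1 eq by (simp add: abs_le_iff)
      next
        have im: "i < m" using i by (simp add: m_def)
        have d: "\<bar>x (k, i) - cs \<rho> D (am k) (ap k) (Suc i)\<bar> \<le> Emax" using dev[of k i] k1 im by auto
        have eq: "mu * lam1 * T = lam1 * T - (1 - mu) * lam1 * T" by (simp add: algebra_simps)
        show "x (k, i) - g (ts ! i) \<ge> mu * lam1 * T"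
          using d kc[of "Suc i"] zc[OF im] gb[OF im] Em2 eq by (simp add: abs_le_iff)
      qed
      then show ?thesis using sp unfolding Hs_def by blast
    qed
    then show ?thesis using cf ffac by simp
  next
    case False
    then obtain q where q: "q \<in> I" and nq: "x q \<notin> {prv am x (fst q) (snd q) + (ap (fst q) - prv am x (fst q) (snd q)) * \<rho> (snd q) + D (snd q) - w * sg (snd q) ..
       prv am x (fst q) (snd q) + (ap (fst q) - prv am x (fst q) (snd q)) * \<rho> (snd q) + D (snd q) + w * sg (snd q)}"
      by blast
    have "chainF \<phi> am I x = 0"
      unfolding chainF_def using q nq finI by (intro prod_zero bexI[of _ q]) (auto simp: \<phi>_def)
    then show ?thesis by simp
  qed
  have lbH: "(\<Prod>q\<in>I. c (fst q) (snd q)) \<le> emeasure M Hs"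
    using chain pw unfolding emH by (meson nn_integral_mono order_trans)
  define e where "e i = - (Lc + T) - S\<^sup>2 * s i" for i
  have sumI: "(\<Sum>q\<in>I. e (snd q)) = real k * (\<Sum>i<m. e i)"
  proof -
    have "(\<Sum>q\<in>I. e (snd q)) = (\<Sum>j\<in>{1..k}. \<Sum>i<m. e i)"
    proof -
      have "(\<Sum>(j,i)\<in>{1..k} \<times> {..<m}. e i) = (\<Sum>j\<in>{1..k}. \<Sum>i<m. e i)"
        by (rule sum.cartesian_product[symmetric])
      moreover have "(\<lambda>(j::nat, i). e i) = (\<lambda>q. e (snd q))" by (simp add: fun_eq_iff split_def)
      ultimately show ?thesis unfolding I_def by simp
    qed
    then show ?thesis by simp
  qed
  have sum_e: "(\<Sum>i<m. e i) = - (real m * (Lc + T) + S\<^sup>2 * (tt m - tt 0))"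
    unfolding e_def sum_s[symmetric] by (simp add: sum.distrib sum_subtractf sum_distrib_left sum_distrib_right algebra_simps)
  have prodc: "(\<Prod>q\<in>I. c (fst q) (snd q)) = ennreal (exp (real k * (\<Sum>i<m. e i)))"
  proof -
    have "(\<Prod>q\<in>I. c (fst q) (snd q)) = (\<Prod>q\<in>I. ennreal (exp (e (snd q))))"
      by (simp add: c_def e_def)
    also have "\<dots> = ennreal (\<Prod>q\<in>I. exp (e (snd q)))" by (rule prod_ennreal) simp
    also have "(\<Prod>q\<in>I. exp (e (snd q))) = exp (\<Sum>q\<in>I. e (snd q))" by (simp add: exp_sum finI)
    finally show ?thesis unfolding sumI .
  qed
  have "exp (real k * (\<Sum>i<m. e i)) \<le> measure M Hs"
  proof -
    have "enn2real (ennreal (exp (real k * (\<Sum>i<m. e i)))) \<le> enn2real (emeasure M Hs)"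
    proof (rule enn2real_mono)
      show "emeasure M Hs < \<top>" using emH_le ennreal_one_less_top by (rule le_less_trans)
    qed (use lbH prodc in simp)
    then show ?thesis by (simp add: measure_def)
  qed
  moreover have "exp (- (real k * (b0 * T * (Lc + T) + (2 * b1 * T)\<^sup>2 * sqrt T))) \<le> exp (real k * (\<Sum>i<m. e i))"
  proof -
    have Lc0: "Lc \<ge> 0" by (simp add: Lc_def)
    have "real m * (Lc + T) \<le> b0 * T * (Lc + T)" using mb Lc0 T1 by (intro mult_right_mono) auto
    moreover have "S\<^sup>2 * (tt m - tt 0) \<le> S\<^sup>2 * sqrt T" using sumT by (intro mult_left_mono) auto
    ultimately have "real m * (Lc + T) + S\<^sup>2 * (tt m - tt 0) \<le> b0 * T * (Lc + T) + (2 * b1 * T)\<^sup>2 * sqrt T"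
      by (simp add: S_def)
    then have "real k * (real m * (Lc + T) + S\<^sup>2 * (tt m - tt 0)) \<le> real k * (b0 * T * (Lc + T) + (2 * b1 * T)\<^sup>2 * sqrt T)"
      by (intro mult_left_mono) auto
    then show ?thesis unfolding sum_e by (simp add: algebra_simps)
  qed
  ultimately show ?thesis unfolding PH by (rule order_trans[rotated])
qed

theorem mainTheorem3:
  fixes k :: nat and b0 b1 lam0 lam1 mu :: real
  assumes "k \<ge> 1" and "b0 > 0" and "b1 > 0" and "lam0 > 0" and "lam1 > 0"
    and "0 < mu" and "mu < 1"
  shows "\<exists>C > 0. \<forall>(b2::real) (T::real) (l::real) (r::real) (am::nat \<Rightarrow> real) (ap::nat \<Rightarrow> real)
           (g::real \<Rightarrow> real) (P::real set).
     b2 > 0 \<longrightarrow> T \<ge> 10 \<longrightarrow> l < r \<longrightarrow>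
     g l = 0 \<longrightarrow> g r = 0 \<longrightarrow>
     finite P \<longrightarrow> P \<subseteq> {l<..<l + sqrt T} \<longrightarrow> P \<subseteq> {l<..<r} \<longrightarrow>
     r - l \<le> b0 * T \<longrightarrow> real (card P) \<le> b0 * T \<longrightarrow>
     (\<forall>x\<in>{l..r}. \<forall>y\<in>{l..r}. \<bar>g x - g y\<bar> \<le> b1 * T * \<bar>x - y\<bar>) \<longrightarrow>
     (\<forall>j\<in>{1..<k}. am j - am (j+1) \<ge> lam0 * sqrt T \<and> ap j - ap (j+1) \<ge> lam0 * sqrt T) \<longrightarrow>
     am k - g l \<ge> lam1 * T \<longrightarrow> ap k - g r \<ge> lam1 * T \<longrightarrow>
     am 1 - g l \<le> b2 * T\<^sup>2 \<longrightarrow> ap 1 - g r \<le> b2 * T\<^sup>2 \<longrightarrow>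
     Pfree_H k l r am ap P g mu lam0 lam1 T \<ge> inverse C * exp (- C * T powr (5/2))"
proof -
  define eps where "eps = (1 - mu) * min lam0 lam1 / (1 + b0)"
  define Lc where "Lc = \<bar>ln (2 * eps * exp (- eps\<^sup>2) / sqrt (2 * pi))\<bar>"
  define K where "K = real k * (b0 * Lc + b0 + 4 * b1\<^sup>2)"
  define C where "C = max 1 K"
  have C1: "C \<ge> 1" by (simp add: C_def)
  have KC: "K \<le> C" by (simp add: C_def)
  have Lc0: "Lc \<ge> 0" by (simp add: Lc_def)
  show ?thesis
  proof (intro exI[of _ C] conjI allI impI)
    show "C > 0" using C1 by simp
    fix b2 T l r :: real and am ap :: "nat \<Rightarrow> real" and g :: "real \<Rightarrow> real" and P :: "real set"
    assume h: "b2 > 0" "T \<ge> 10" "l < r" "g l = 0" "g r = 0" "finite P" "P \<subseteq> {l<..<l + sqrt T}"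
      "P \<subseteq> {l<..<r}" "r - l \<le> b0 * T" "real (card P) \<le> b0 * T"
      "\<forall>x\<in>{l..r}. \<forall>y\<in>{l..r}. \<bar>g x - g y\<bar> \<le> b1 * T * \<bar>x - y\<bar>"
      "\<forall>j\<in>{1..<k}. am j - am (j+1) \<ge> lam0 * sqrt T \<and> ap j - ap (j+1) \<ge> lam0 * sqrt T"
      "am k - g l \<ge> lam1 * T" "ap k - g r \<ge> lam1 * T"
    have T1: "T \<ge> 1" using h(2) by simp
    have core': "exp (- (real k * (b0 * T * (Lc + T) + (2 * b1 * T)\<^sup>2 * sqrt T))) \<le> Pfree_H k l r am ap P g mu lam0 lam1 T"
      by (rule core[OF assms T1 h(3-8) h(10-14) eps_def Lc_def])
    define Y where "Y = T\<^sup>2 * sqrt T"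
    have Ypow: "T powr (5/2) = Y"
    proof -
      have "T powr (5/2) = T powr (2 + 1/2)" by simp
      also have "\<dots> = T powr 2 * T powr (1/2)" by (rule powr_add)
      also have "T powr 2 = T\<^sup>2" using T1 by (simp add: powr_numeral)
      also have "T powr (1/2) = sqrt T" using T1 by (simp add: powr_half_sqrt)
      finally show ?thesis by (simp add: Y_def)
    qed
    have sT: "sqrt T \<ge> 1" using T1 by simp
    have TY: "T \<le> Y"
    proof -
      have "T * 1 \<le> T * T" using T1 by (intro mult_left_mono) auto
      also have "T * T * 1 \<le> T * T * sqrt T" using T1 sT by (intro mult_left_mono) auto
      finally show ?thesis by (simp add: Y_def power2_eq_square)
    qed
    have T2Y: "T\<^sup>2 \<le> Y" unfolding Y_def using sT T1 by (simp add: mult_le_cancel_left1)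
    have "b0 * T * (Lc + T) + (2 * b1 * T)\<^sup>2 * sqrt T = b0 * Lc * T + b0 * T\<^sup>2 + 4 * b1\<^sup>2 * Y"
      by (simp add: Y_def power2_eq_square algebra_simps)
    also have "\<dots> \<le> b0 * Lc * Y + b0 * Y + 4 * b1\<^sup>2 * Y"
      using TY T2Y assms(2) Lc0 by (intro add_mono mult_left_mono) auto
    also have "\<dots> = (b0 * Lc + b0 + 4 * b1\<^sup>2) * Y" by (simp add: algebra_simps)
    finally have "real k * (b0 * T * (Lc + T) + (2 * b1 * T)\<^sup>2 * sqrt T) \<le> K * Y"
      unfolding K_def by (simp add: mult.assoc mult_left_mono)
    also have "K * Y \<le> C * Y" using KC TY T1 by (intro mult_right_mono) auto
    finally have "exp (- C * Y) \<le> exp (- (real k * (b0 * T * (Lc + T) + (2 * b1 * T)\<^sup>2 * sqrt T)))" by simp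
    moreover have "inverse C * exp (- C * Y) \<le> exp (- C * Y)"
      using C1 by (simp add: mult_le_cancel_right1 inverse_le_1_iff)
    ultimately show "Pfree_H k l r am ap P g mu lam0 lam1 T \<ge> inverse C * exp (- C * T powr (5/2))"
      using core' unfolding Ypow by linarith
  qed
qed

end
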